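(* Let $\mathcal{C}$ be a division Cayley algebra over a field $\mathbb{F}$ with norm $\mathrm{n}$. Let $\mathcal{K}$ be a two-dimensional composition subalgebra of $\mathcal{C}$, let $x\in\mathcal{C}$ be arbitrary, and let $\varphi$ be a local automorphism of $\mathcal{C}$. Then there is an automorphism $\psi$ of $\mathcal{C}$ such that $\psi|_{\mathcal{K}}=\varphi|_{\mathcal{K}}$ and $\psi(x)=\varphi(x)$.
   Context: A Cayley (octonion) algebra over $\mathbb{F}$ is a unital nonassociative algebra $\mathcal{C}$ of dimension $8$ over $\mathbb{F}$ endowed with a quadratic form $\mathrm{n}:\mathcal{C}\to\mathbb{F}$ (the norm) such that $\mathrm{n}(xy)=\mathrm{n}(x)\mathrm{n}(y)$ for all $x,y$ and whose polar form $\mathrm{n}(x,y)=\mathrm{n}(x+y)-\mathrm{n}(x)-\mathrm{n}(y)$ is nondegenerate. It is a division Cayley algebra if it is a division algebra (equivalently, $\mathrm{n}$ is anisotropic: $\mathrm{n}(x)\neq0$ for $x\neq0$). A two-dimensional composition subalgebra $\mathcal{K}$ is a two-dimensional subalgebra containing $1$ such that the restriction of $\mathrm{n}$ to $\mathcal{K}$ is regular (its polar form restricted to $\mathcal{K}$ is nondegenerate). A linear map $\varphi:\mathcal{C}\to\mathcal{C}$ is a local automorphism if for every $y\in\mathcal{C}$ there is an automorphism $\varphi_y$ of $\mathcal{C}$ with $\varphi(y)=\varphi_y(y)$. *)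

theory Defs
  imports Complex_Main
begin

text \<open>An algebra over a field 'k is modelled as a 'k-vector space 'v (given by the
  scalar multiplication sc) with a bilinear multiplication mul.\<close>

definition polar :: "('v::ab_group_add \<Rightarrow> 'k::field) \<Rightarrow> 'v \<Rightarrow> 'v \<Rightarrow> 'k" where
  "polar q x y = q (x + y) - q x - q y"

definition quadratic_form :: "('k::field \<Rightarrow> 'v::ab_group_add \<Rightarrow> 'v) \<Rightarrow> ('v \<Rightarrow> 'k) \<Rightarrow> bool" where
  "quadratic_form sc q \<longleftrightarrow>
     (\<forall>a x. q (sc a x) = a^2 * q x) \<and>
     (\<forall>x. Vector_Spaces.linear sc (*) (\<lambda>y. polar q x y))"

definition bilinear_mult :: "('k::field \<Rightarrow> 'v::ab_group_add \<Rightarrow> 'v) \<Rightarrow> ('v \<Rightarrow> 'v \<Rightarrow> 'v) \<Rightarrow> bool" where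
  "bilinear_mult sc mul \<longleftrightarrow>
     (\<forall>x. Vector_Spaces.linear sc sc (\<lambda>y. mul x y)) \<and>
     (\<forall>y. Vector_Spaces.linear sc sc (\<lambda>x. mul x y))"

definition cayley_algebra ::
  "('k::field \<Rightarrow> 'v::ab_group_add \<Rightarrow> 'v) \<Rightarrow> ('v \<Rightarrow> 'v \<Rightarrow> 'v) \<Rightarrow> 'v \<Rightarrow> ('v \<Rightarrow> 'k) \<Rightarrow> bool" where
  "cayley_algebra sc mul one nrm \<longleftrightarrow>
     vector_space sc \<and>
     vector_space.dim sc (UNIV :: 'v set) = 8 \<and>
     bilinear_mult sc mul \<and>
     (\<forall>x. mul one x = x \<and> mul x one = x) \<and>
     quadratic_form sc nrm \<and>
     (\<forall>x y. nrm (mul x y) = nrm x * nrm y) \<and>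
     (\<forall>x. (\<forall>y. polar nrm x y = 0) \<longrightarrow> x = 0)"

definition division_algebra :: "('v::ab_group_add \<Rightarrow> 'v \<Rightarrow> 'v) \<Rightarrow> bool" where
  "division_algebra mul \<longleftrightarrow> (\<forall>a. a \<noteq> 0 \<longrightarrow> bij (mul a) \<and> bij (\<lambda>x. mul x a))"

definition algebra_automorphism ::
  "('k::field \<Rightarrow> 'v::ab_group_add \<Rightarrow> 'v) \<Rightarrow> ('v \<Rightarrow> 'v \<Rightarrow> 'v) \<Rightarrow> ('v \<Rightarrow> 'v) \<Rightarrow> bool" where
  "algebra_automorphism sc mul f \<longleftrightarrow>
     Vector_Spaces.linear sc sc f \<and> bij f \<and> (\<forall>x y. f (mul x y) = mul (f x) (f y))"

definition local_automorphism ::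
  "('k::field \<Rightarrow> 'v::ab_group_add \<Rightarrow> 'v) \<Rightarrow> ('v \<Rightarrow> 'v \<Rightarrow> 'v) \<Rightarrow> ('v \<Rightarrow> 'v) \<Rightarrow> bool" where
  "local_automorphism sc mul \<phi> \<longleftrightarrow>
     Vector_Spaces.linear sc sc \<phi> \<and>
     (\<forall>y. \<exists>g. algebra_automorphism sc mul g \<and> \<phi> y = g y)"

definition two_dim_composition_subalgebra ::
  "('k::field \<Rightarrow> 'v::ab_group_add \<Rightarrow> 'v) \<Rightarrow> ('v \<Rightarrow> 'v \<Rightarrow> 'v) \<Rightarrow> 'v \<Rightarrow> ('v \<Rightarrow> 'k) \<Rightarrow> 'v set \<Rightarrow> bool" where
  "two_dim_composition_subalgebra sc mul one nrm K \<longleftrightarrow>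
     module.subspace sc K \<and> vector_space.dim sc K = 2 \<and> one \<in> K \<and>
     (\<forall>x\<in>K. \<forall>y\<in>K. mul x y \<in> K) \<and>
     (\<forall>x\<in>K. (\<forall>y\<in>K. polar nrm x y = 0) \<longrightarrow> x = 0)"

end

theory Submission
  imports Defs
begin

locale cay =
  fixes sc :: "'k::field \<Rightarrow> 'v::ab_group_add \<Rightarrow> 'v"
    and mul :: "'v \<Rightarrow> 'v \<Rightarrow> 'v" and one :: 'v and nrm :: "'v \<Rightarrow> 'k"
  assumes cay: "cayley_algebra sc mul one nrm"
    and div: "division_algebra mul"
begin

abbreviation pl where "pl \<equiv> polar nrm"

lemma vs: "vector_space sc" using cay by (simp add: cayley_algebra_def)

sublocale vs: vector_space sc by (rule vs)

lemma dim8: "vs.dim UNIV = 8" using cay by (simp add: cayley_algebra_def)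

definition Bas where "Bas = (SOME B. vs.independent B \<and> vs.span B = UNIV \<and> card B = 8)"

lemma Bas: "vs.independent Bas \<and> vs.span Bas = UNIV \<and> card Bas = 8"
proof -
  obtain B where "vs.independent B" "UNIV \<subseteq> vs.span B" "card B = vs.dim (UNIV::'v set)"
    using vs.basis_exists[of UNIV] by metis
  then have "\<exists>B. vs.independent B \<and> vs.span B = UNIV \<and> card B = 8" using dim8 by auto
  then show ?thesis unfolding Bas_def by (rule someI_ex)
qed

sublocale fd: finite_dimensional_vector_space sc Bas
  by unfold_locales (use Bas card.infinite in fastforce)+

lemma linr: "Vector_Spaces.linear sc sc (mul x)" and linl: "Vector_Spaces.linear sc sc (\<lambda>y. mul y x)"
  using cay by (auto simp: cayley_algebra_def bilinear_mult_def)

lemma mul_add_r: "mul x (y + z) = mul x y + mul x z" using linr[of x] by (simp add: Vector_Spaces.linear_iff)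
lemma mul_add_l: "mul (y + z) x = mul y x + mul z x" using linl[of x] by (simp add: Vector_Spaces.linear_iff)
lemma mul_sc_r: "mul x (sc c y) = sc c (mul x y)" using linr[of x] by (simp add: Vector_Spaces.linear_iff)
lemma mul_sc_l: "mul (sc c y) x = sc c (mul y x)" using linl[of x] by (simp add: Vector_Spaces.linear_iff)
lemma mul_0_r: "mul x 0 = 0" using mul_sc_r[of x 0 0] by simp
lemma mul_0_l: "mul 0 x = 0" using mul_sc_l[of 0 0 x] by simp
lemma mul_neg_r: "mul x (- y) = - mul x y" by (metis add_eq_0_iff mul_0_r mul_add_r)
lemma mul_neg_l: "mul (- y) x = - mul y x" by (metis add_eq_0_iff mul_0_l mul_add_l)
lemma mul_diff_r: "mul x (y - z) = mul x y - mul x z" by (metis diff_conv_add_uminus mul_add_r mul_neg_r)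
lemma mul_diff_l: "mul (y - z) x = mul y x - mul z x" by (metis diff_conv_add_uminus mul_add_l mul_neg_l)

lemmas mul_simps = mul_add_r mul_add_l mul_sc_r mul_sc_l mul_0_r mul_0_l mul_neg_r mul_neg_l mul_diff_r mul_diff_l

lemma one_l[simp]: "mul one x = x" and one_r[simp]: "mul x one = x"
  using cay by (auto simp: cayley_algebra_def)

lemma nrm_mul: "nrm (mul x y) = nrm x * nrm y" using cay by (simp add: cayley_algebra_def)
lemma nrm_sc: "nrm (sc a x) = a^2 * nrm x" using cay by (simp add: cayley_algebra_def quadratic_form_def)
lemma pl_lin: "Vector_Spaces.linear sc (*) (pl x)" using cay by (simp add: cayley_algebra_def quadratic_form_def)
lemma nondeg: "(\<And>y. pl x y = 0) \<Longrightarrow> x = 0" using cay by (simp add: cayley_algebra_def)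

lemma pl_sym: "pl x y = pl y x" by (simp add: polar_def add.commute)
lemma pl_add_r: "pl x (y + z) = pl x y + pl x z" using pl_lin[of x] by (simp add: Vector_Spaces.linear_iff)
lemma pl_sc_r: "pl x (sc c y) = c * pl x y" using pl_lin[of x] by (simp add: Vector_Spaces.linear_iff)
lemma pl_add_l: "pl (y + z) x = pl y x + pl z x" by (metis pl_add_r pl_sym)
lemma pl_sc_l: "pl (sc c y) x = c * pl y x" by (metis pl_sc_r pl_sym)
lemma pl_0_r: "pl x 0 = 0" using pl_sc_r[of x 0 0] by simp
lemma pl_0_l: "pl 0 x = 0" using pl_sc_l[of 0 0 x] by simp
lemma pl_neg_r: "pl x (- y) = - pl x y" by (metis add_eq_0_iff pl_0_r pl_add_r)
lemma pl_neg_l: "pl (- y) x = - pl y x" by (metis pl_neg_r pl_sym)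
lemma pl_diff_r: "pl x (y - z) = pl x y - pl x z" by (metis diff_conv_add_uminus pl_add_r pl_neg_r)
lemma pl_diff_l: "pl (y - z) x = pl y x - pl z x" by (metis diff_conv_add_uminus pl_add_l pl_neg_l)

lemmas pl_simps = pl_add_r pl_add_l pl_sc_r pl_sc_l pl_0_r pl_0_l pl_neg_r pl_neg_l pl_diff_r pl_diff_l

lemma nrm_add: "nrm (x + y) = nrm x + nrm y + pl x y" by (simp add: polar_def)
lemma nrm_0: "nrm 0 = 0" using nrm_sc[of 0 0] by simp
lemma pl_self: "pl x x = 2 * nrm x"
proof -
  have "nrm (x + x) = nrm (sc 2 x)" by (metis one_add_one vs.scale_left_distrib vs.scale_one)
  then show ?thesis by (simp add: polar_def nrm_sc power2_eq_square)
qed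

lemma one_ne0: "one \<noteq> 0"
proof
  assume "one = 0"
  then have "x = 0" for x :: 'v by (metis one_l mul_0_l)
  then have "(UNIV::'v set) = {0}" by auto
  then have "vs.dim (UNIV::'v set) = vs.dim ({}::'v set)" by (metis vs.dim_span vs.span_empty)
  then show False using dim8 vs.dim_eq_card_independent[OF vs.independent_empty] by simp
qed

lemma nrm_one: "nrm one = 1"
proof -
  have e: "nrm one = nrm one * nrm one" by (metis nrm_mul one_l)
  have "nrm one \<noteq> 0"
  proof
    assume h: "nrm one = 0"
    have "\<And>x. nrm x = 0" by (metis nrm_mul one_l h mult_zero_left)
    then have "\<And>x y. pl x y = 0" by (simp add: polar_def)
    then have "one = 0" using nondeg by blast
    then show False using one_ne0 by simp
  qed
  then show ?thesis using e by (metis mult_cancel_left1)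
qed

lemma N1: "pl (mul x y) (mul x z) = nrm x * pl y z"
proof -
  have "nrm (mul x (y+z)) = nrm x * nrm (y+z)" by (rule nrm_mul)
  then show ?thesis by (simp add: mul_add_r nrm_add nrm_mul algebra_simps)
qed

lemma N1r: "pl (mul y x) (mul z x) = nrm x * pl y z"
proof -
  have "nrm (mul (y+z) x) = nrm (y+z) * nrm x" by (rule nrm_mul)
  then show ?thesis by (simp add: mul_add_l nrm_add nrm_mul algebra_simps)
qed

lemma N2: "pl (mul x y) (mul w z) + pl (mul w y) (mul x z) = pl x w * pl y z"
proof -
  have "pl (mul (x+w) y) (mul (x+w) z) = nrm (x+w) * pl y z" by (rule N1)
  then show ?thesis by (simp add: mul_add_l pl_simps N1 nrm_add algebra_simps pl_sym[of "mul w y" "mul x z"] pl_sym[of w x])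
qed

lemma N2r: "pl (mul y x) (mul z w) + pl (mul y w) (mul z x) = pl x w * pl y z"
proof -
  have "pl (mul y (x+w)) (mul z (x+w)) = nrm (x+w) * pl y z" by (rule N1r)
  then show ?thesis by (simp add: mul_add_r pl_simps N1r nrm_add algebra_simps pl_sym[of "mul y w" "mul z x"] pl_sym[of w x])
qed

definition tr where "tr x = pl x one"
definition cj where "cj x = sc (tr x) one - x"

lemma tr_one: "tr one = 2" by (simp add: tr_def pl_self nrm_one)
lemma tr_add: "tr (x + y) = tr x + tr y" by (simp add: tr_def pl_simps)
lemma tr_sc: "tr (sc c x) = c * tr x" by (simp add: tr_def pl_simps)
lemma tr_neg: "tr (- x) = - tr x" by (simp add: tr_def pl_simps)
lemma tr_diff: "tr (x - y) = tr x - tr y" by (simp add: tr_def pl_simps)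
lemma tr_0: "tr 0 = 0" by (simp add: tr_def pl_simps)

lemma mul_cj_l: "mul (cj x) z = sc (tr x) z - mul x z" by (simp add: cj_def mul_simps)
lemma mul_cj_r: "mul z (cj x) = sc (tr x) z - mul z x" by (simp add: cj_def mul_simps)

lemma cj_add: "cj (x + y) = cj x + cj y" by (simp add: cj_def tr_add vs.scale_left_distrib)
lemma cj_sc: "cj (sc c x) = sc c (cj x)" by (simp add: cj_def tr_sc vs.scale_right_diff_distrib)
lemma cj_neg: "cj (- x) = - cj x" by (simp add: cj_def tr_neg vs.scale_minus_left)
lemma cj_diff: "cj (x - y) = cj x - cj y" by (simp add: cj_def tr_diff vs.scale_left_diff_distrib)
lemma cj_0: "cj 0 = 0" by (simp add: cj_def tr_0)
lemma tr_cj: "tr (cj x) = tr x" by (simp add: cj_def tr_diff tr_sc tr_one) 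
lemma cj_cj: "cj (cj x) = x" by (simp add: cj_def tr_diff tr_sc tr_one) 
lemma cj_one: "cj one = one" by (simp add: cj_def tr_one)
    (metis add_diff_cancel_left' one_add_one vs.scale_left_distrib vs.scale_one)

lemma Adj: "pl (mul x y) z = pl y (mul (cj x) z)"
proof -
  have "pl (mul x y) (mul one z) + pl (mul one y) (mul x z) = pl x one * pl y z" by (rule N2)
  then show ?thesis by (simp add: mul_cj_l pl_simps tr_def eq_diff_eq)
qed

lemma Adjr: "pl (mul y x) z = pl y (mul z (cj x))"
proof -
  have "pl (mul y x) (mul z one) + pl (mul y one) (mul z x) = pl x one * pl y z" by (rule N2r)
  then show ?thesis by (simp add: mul_cj_r pl_simps tr_def eq_diff_eq)
qed

lemma pl_cj: "pl (cj x) y = pl x (cj y)"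
  by (simp add: cj_def pl_simps tr_def pl_sym mult.commute)

lemma QE1: "mul (cj x) x = sc (nrm x) one"
proof -
  have "pl (mul (cj x) x - sc (nrm x) one) z = 0" for z
    using Adj[of "cj x" x z] N1[of x one z] by (simp add: cj_cj pl_simps)
  then show ?thesis by (metis nondeg right_minus_eq)
qed

lemma QE2: "mul x (cj x) = sc (nrm x) one"
proof -
  have "pl (mul x (cj x) - sc (nrm x) one) z = 0" for z
    using Adjr[of x "cj x" z] N1r[of one x z] by (simp add: cj_cj pl_simps)
  then show ?thesis by (metis nondeg right_minus_eq)
qed

lemma Alt1: "mul (cj x) (mul x y) = sc (nrm x) y"
proof -
  have "pl (mul (cj x) (mul x y) - sc (nrm x) y) z = 0" for z
    using Adj[of "cj x" "mul x y" z] N1[of x y z] by (simp add: cj_cj pl_simps)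
  then show ?thesis by (metis nondeg right_minus_eq)
qed

lemma Alt1r: "mul (mul y x) (cj x) = sc (nrm x) y"
proof -
  have "pl (mul (mul y x) (cj x) - sc (nrm x) y) z = 0" for z
    using Adjr[of "mul y x" "cj x" z] N1r[of y x z] by (simp add: cj_cj pl_simps)
  then show ?thesis by (metis nondeg right_minus_eq)
qed

lemma Lin1: "mul (cj x) (mul w y) + mul (cj w) (mul x y) = sc (pl x w) y"
proof -
  have "mul (cj (x+w)) (mul (x+w) y) = sc (nrm (x+w)) y" by (rule Alt1)
  then show ?thesis using Alt1[of x y] Alt1[of w y]
    by (simp add: cj_add mul_simps nrm_add vs.scale_left_distrib algebra_simps pl_sym[of w x] pl_sym[of y x])
qed

lemma Lin1r: "mul (mul y x) (cj w) + mul (mul y w) (cj x) = sc (pl x w) y"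
proof -
  have "mul (mul y (x+w)) (cj (x+w)) = sc (nrm (x+w)) y" by (rule Alt1r)
  then show ?thesis using Alt1r[of y x] Alt1r[of y w]
    by (simp add: cj_add mul_simps nrm_add vs.scale_left_distrib algebra_simps pl_sym[of w x] pl_sym[of y x])
qed

lemma QElin: "mul x (cj y) + mul y (cj x) = sc (pl x y) one"
proof -
  have "mul (x+y) (cj (x+y)) = sc (nrm (x+y)) one" by (rule QE2)
  then show ?thesis using QE2[of x] QE2[of y]
    by (simp add: cj_add mul_simps nrm_add vs.scale_left_distrib algebra_simps pl_sym[of w x] pl_sym[of y x])
qed

lemma pl_cj_one: "pl (cj a) z = pl one (mul a z)"
  using Adj[of "cj a" one z] by (simp add: cj_cj)

lemma cj_mul: "cj (mul x y) = mul (cj y) (cj x)"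
proof -
  have "pl (cj (mul x y) - mul (cj y) (cj x)) z = 0" for z
  proof -
    have a: "pl (cj (mul x y)) z = pl (mul x y) (cj z)"
      using pl_cj_one[of "mul x y" z] Adjr[of "mul x y" z one] by (simp add: pl_sym)
    have b: "pl (mul (cj y) (cj x)) z = pl y (mul (cj x) (cj z))"
      using Adj[of "cj y" "cj x" z] Adjr[of y z "cj x"] pl_cj_one[of x "mul y z"] cj_cj[of y]
      by (metis Adj cj_cj pl_cj_one pl_sym one_r)
    show ?thesis using a b Adj[of x y "cj z"] by (simp add: pl_simps)
  qed
  then show ?thesis by (metis nondeg right_minus_eq)
qed

lemma aniso: "nrm x = 0 \<Longrightarrow> x = 0"
proof (rule ccontr)
  assume h: "nrm x = 0" "x \<noteq> 0"
  have "cj x \<noteq> 0" using h cj_cj[of x] cj_0 by metis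
  then have "bij (mul (cj x))" using div by (simp add: division_algebra_def)
  then have "inj (mul (cj x))" by (rule bij_is_inj)
  moreover have "mul (cj x) x = mul (cj x) 0" using QE1[of x] h by (simp add: mul_0_r)
  ultimately show False using h by (meson injD)
qed

definition csub where "csub D \<longleftrightarrow> vs.subspace D \<and> one \<in> D \<and> (\<forall>x\<in>D. \<forall>y\<in>D. mul x y \<in> D) \<and>
   (\<forall>x\<in>D. (\<forall>y\<in>D. pl x y = 0) \<longrightarrow> x = 0)"
definition perp where "perp a D \<longleftrightarrow> (\<forall>d\<in>D. pl a d = 0)"

lemma tr_def2: "tr x = pl one x" by (simp add: tr_def pl_sym)

context fixes D a assumes csD: "csub D" and pa: "perp a D"
begin

lemma D_sub: "vs.subspace D" using csD by (simp add: csub_def)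
lemma D_one: "one \<in> D" using csD by (simp add: csub_def)
lemma D_mul: "x \<in> D \<Longrightarrow> y \<in> D \<Longrightarrow> mul x y \<in> D" using csD by (simp add: csub_def)
lemma D_nd: "x \<in> D \<Longrightarrow> (\<And>y. y \<in> D \<Longrightarrow> pl x y = 0) \<Longrightarrow> x = 0" using csD by (simp add: csub_def)
lemma D_add: "x \<in> D \<Longrightarrow> y \<in> D \<Longrightarrow> x + y \<in> D" using D_sub vs.subspace_add by blast
lemma D_diff: "x \<in> D \<Longrightarrow> y \<in> D \<Longrightarrow> x - y \<in> D" using D_sub vs.subspace_diff by blast
lemma D_neg: "x \<in> D \<Longrightarrow> - x \<in> D" using D_sub vs.subspace_neg by blast
lemma D_sc: "x \<in> D \<Longrightarrow> sc c x \<in> D" using D_sub vs.subspace_scale by blast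
lemma D_0: "0 \<in> D" using D_sub vs.subspace_0 by blast
lemma D_cj: "x \<in> D \<Longrightarrow> cj x \<in> D" unfolding cj_def by (intro D_diff D_sc D_one)

lemma pa': "d \<in> D \<Longrightarrow> pl a d = 0" using pa by (simp add: perp_def)
lemma tr_a: "tr a = 0" using pa' D_one by (simp add: tr_def)
lemma cj_a: "cj a = - a" by (simp add: cj_def tr_a)

lemma F0: "x \<in> D \<Longrightarrow> y \<in> D \<Longrightarrow> pl (mul y a) x = 0"
  using Adj[of y a x] pa' D_mul D_cj by simp

lemma tr_ya: "y \<in> D \<Longrightarrow> tr (mul y a) = 0" using F0 D_one by (simp add: tr_def)
lemma cj_ya: "y \<in> D \<Longrightarrow> cj (mul y a) = - mul y a" by (simp add: cj_def tr_ya)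

lemma F1: "x \<in> D \<Longrightarrow> mul a x = mul (cj x) a"
proof -
  assume x: "x \<in> D"
  have "mul a (cj (cj x)) + mul (cj x) (cj a) = sc (pl a (cj x)) one" by (rule QElin)
  then have "mul a x - mul (cj x) a = 0" using pa' D_cj x by (simp add: cj_cj cj_a mul_simps)
  then show ?thesis by simp
qed

lemma F1': "x \<in> D \<Longrightarrow> mul x a = mul a (cj x)"
  using F1[of "cj x"] D_cj by (simp add: cj_cj)

lemma F2: "x \<in> D \<Longrightarrow> y \<in> D \<Longrightarrow> mul (mul x a) y = mul (mul x (cj y)) a"
proof -
  assume x: "x \<in> D" and y: "y \<in> D"
  have "mul (mul x a) (cj (cj y)) + mul (mul x (cj y)) (cj a) = sc (pl a (cj y)) x" by (rule Lin1r)
  then have "mul (mul x a) y - mul (mul x (cj y)) a = 0" using pa' D_cj y by (simp add: cj_cj cj_a mul_simps)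
  then show ?thesis by simp
qed

lemma F3: "x \<in> D \<Longrightarrow> y \<in> D \<Longrightarrow> mul x (mul y a) = mul (mul y x) a"
proof -
  assume x: "x \<in> D" and y: "y \<in> D"
  have "mul (cj (cj x)) (mul a (cj y)) + mul (cj a) (mul (cj x) (cj y)) = sc (pl (cj x) a) (cj y)" by (rule Lin1)
  moreover have "pl (cj x) a = 0" using pa'[OF D_cj[OF x]] by (metis pl_sym)
  ultimately have e: "mul x (mul a (cj y)) = mul a (mul (cj x) (cj y))" by (simp add: cj_cj cj_a mul_simps)
  have "mul a (mul (cj x) (cj y)) = mul a (cj (mul y x))" by (simp add: cj_mul)
  also have "\<dots> = mul (mul y x) a" using F1[of "cj (mul y x)"] D_cj D_mul x y by (simp add: cj_cj)
  finally show ?thesis using e F1'[OF y] by simp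
qed

lemma F4: "x \<in> D \<Longrightarrow> y \<in> D \<Longrightarrow> mul (mul x a) (mul y a) = sc (- nrm a) (mul (cj y) x)"
proof -
  assume x: "x \<in> D" and y: "y \<in> D"
  have L: "mul (cj (cj (mul x a))) (mul a (cj y)) + mul (cj a) (mul (cj (mul x a)) (cj y)) = sc (pl (cj (mul x a)) a) (cj y)" by (rule Lin1)
  have c1: "cj (mul x a) = - mul x a" by (rule cj_ya[OF x])
  have c2: "mul a (cj y) = mul y a" using F1'[OF y] by simp
  have c3: "mul (mul x a) (cj y) = mul (mul x y) a" using F2[of x "cj y"] x y D_cj by (simp add: cj_cj)
  have c4: "mul (mul x y) a = mul a (cj (mul x y))" using F1'[of "mul x y"] D_mul x y by simp
  have c5: "mul a (mul a w) = sc (- nrm a) w" for w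
  proof -
    have "- mul a (mul a w) = sc (nrm a) w" using Alt1[of a w] by (simp add: cj_a mul_simps)
    then show ?thesis by (metis minus_minus vs.scale_minus_left)
  qed
  have c6: "pl (mul x a) a = nrm a * tr x" using N1r[of x a one] by (simp add: tr_def)
  from L have "mul (mul x a) (mul y a) + sc (- nrm a) (cj (mul x y)) = sc (- (nrm a * tr x)) (cj y)"
    by (simp add: c1 c2 c3 c4 c5 c6 cj_cj cj_neg cj_a mul_simps pl_simps)
  then have "mul (mul x a) (mul y a) = sc (nrm a) (cj (mul x y)) - sc (nrm a * tr x) (cj y)"
    by (simp add: vs.scale_minus_left algebra_simps)
  also have "\<dots> = sc (- nrm a) (mul (cj y) x)"
    by (simp add: cj_mul mul_cj_r vs.scale_right_diff_distrib vs.scale_minus_left)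
  finally show ?thesis .
qed

lemma prodf: "x \<in> D \<Longrightarrow> y \<in> D \<Longrightarrow> u \<in> D \<Longrightarrow> v \<in> D \<Longrightarrow>
  mul (x + mul y a) (u + mul v a) = (mul x u + sc (- nrm a) (mul (cj v) y)) + mul (mul v x + mul y (cj u)) a"
  by (simp add: mul_simps F2 F3 F4)

end

definition E where "E D a = {x + mul y a | x y. x \<in> D \<and> y \<in> D}"

definition dbl where "dbl f D a a' z = (let p = (SOME p. fst p \<in> D \<and> snd p \<in> D \<and> z = fst p + mul (snd p) a)
   in f (fst p) + mul (f (snd p)) a')"

definition dhom where "dhom f D D' \<longleftrightarrow> (\<forall>x\<in>D. f x \<in> D') \<and> (\<forall>x\<in>D. \<forall>y\<in>D. f (x + y) = f x + f y) \<and>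
  (\<forall>c. \<forall>x\<in>D. f (sc c x) = sc c (f x)) \<and> (\<forall>x\<in>D. \<forall>y\<in>D. f (mul x y) = mul (f x) (f y)) \<and>
  f one = one \<and> (\<forall>x\<in>D. f (cj x) = cj (f x))"

lemma E_mem: "x \<in> D \<Longrightarrow> y \<in> D \<Longrightarrow> x + mul y a \<in> E D a" unfolding E_def by blast
lemma E_cases: "z \<in> E D a \<Longrightarrow> (\<And>x y. x \<in> D \<Longrightarrow> y \<in> D \<Longrightarrow> z = x + mul y a \<Longrightarrow> P) \<Longrightarrow> P"
  unfolding E_def by blast

context fixes D a assumes csD: "csub D" and pa: "perp a D" and na: "nrm a \<noteq> 0"
begin

lemma uniq: assumes "x \<in> D" "y \<in> D" "x' \<in> D" "y' \<in> D" "x + mul y a = x' + mul y' a"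
  shows "x = x' \<and> y = y'"
proof -
  have e: "x - x' = mul (y' - y) a" using assms(5) by (simp add: mul_diff_l algebra_simps)
  have "x - x' = 0"
  proof (rule D_nd[OF csD pa])
    show "x - x' \<in> D" using assms D_diff[OF csD pa] by blast
    fix d assume "d \<in> D"
    then show "pl (x - x') d = 0" unfolding e using F0[OF csD pa] assms D_diff[OF csD pa] by blast
  qed
  then have "mul (y' - y) a = 0" using e by simp
  then have "nrm (y' - y) * nrm a = 0" by (metis nrm_mul nrm_0)
  then have "y' - y = 0" using na aniso by (metis mult_eq_0_iff)
  then show ?thesis using \<open>x - x' = 0\<close> by simp
qed

lemma D_sub_E: "D \<subseteq> E D a"
proof
  fix x assume "x \<in> D" then show "x \<in> E D a" using E_mem[of x D 0 a] D_0[OF csD pa] by (simp add: mul_0_l)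
qed

lemma csub_E: "csub (E D a)"
proof -
  note DD = D_add[OF csD pa] D_diff[OF csD pa] D_sc[OF csD pa] D_mul[OF csD pa] D_cj[OF csD pa] D_0[OF csD pa] D_one[OF csD pa] D_neg[OF csD pa]
  have sub: "vs.subspace (E D a)"
    unfolding vs.subspace_def
  proof (intro conjI ballI allI)
    show "0 \<in> E D a" using E_mem[OF DD(6) DD(6), of a] by (simp add: mul_0_l)
  next
    fix z1 z2 assume "z1 \<in> E D a" "z2 \<in> E D a"
    then show "z1 + z2 \<in> E D a"
    proof (elim E_cases)
      fix x1 y1 x2 y2 assume h: "x1 \<in> D" "y1 \<in> D" "z1 = x1 + mul y1 a" "x2 \<in> D" "y2 \<in> D" "z2 = x2 + mul y2 a"
      have "z1 + z2 = (x1 + x2) + mul (y1 + y2) a" by (simp add: h mul_add_l algebra_simps)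
      then show ?thesis using E_mem[OF DD(1)[OF h(1,4)] DD(1)[OF h(2,5)]] by simp
    qed
  next
    fix c z assume "z \<in> E D a"
    then show "sc c z \<in> E D a"
    proof (elim E_cases)
      fix x y assume h: "x \<in> D" "y \<in> D" "z = x + mul y a"
      have "sc c z = sc c x + mul (sc c y) a" by (simp add: h mul_sc_l vs.scale_right_distrib)
      then show ?thesis using E_mem[OF DD(3)[OF h(1)] DD(3)[OF h(2)]] by simp
    qed
  qed
  have one: "one \<in> E D a" using D_sub_E DD by blast
  have mc: "mul z1 z2 \<in> E D a" if "z1 \<in> E D a" "z2 \<in> E D a" for z1 z2
    using that
  proof (elim E_cases)
    fix x y u v assume h: "x \<in> D" "y \<in> D" "z1 = x + mul y a" "u \<in> D" "v \<in> D" "z2 = u + mul v a"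
    show "mul z1 z2 \<in> E D a" unfolding h(3,6) prodf[OF csD pa h(1,2,4,5)]
      by (rule E_mem) (use h DD in auto)
  qed
  have nd: "z = 0" if z: "z \<in> E D a" and o: "\<forall>w\<in>E D a. pl z w = 0" for z
    using z
  proof (elim E_cases)
    fix x y assume h: "x \<in> D" "y \<in> D" "z = x + mul y a"
    have x0: "x = 0"
    proof (rule D_nd[OF csD pa h(1)])
      fix d assume d: "d \<in> D"
      then have "pl z d = 0" using o D_sub_E by blast
      then show "pl x d = 0" using F0[OF csD pa d h(2)] by (simp add: h(3) pl_simps)
    qed
    have y0: "y = 0"
    proof (rule D_nd[OF csD pa h(2)])
      fix d assume d: "d \<in> D"
      have "mul d a \<in> E D a" using E_mem[OF DD(6) d, of a] by simp
      then have "pl z (mul d a) = 0" using o by blast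
      then have "nrm a * pl y d = 0" using N1r[of y a d] by (simp add: h(3) x0)
      then show "pl y d = 0" using na by simp
    qed
    show "z = 0" using h x0 y0 by (simp add: mul_0_l)
  qed
  show ?thesis unfolding csub_def using sub one mc nd by blast
qed

lemma dbl_eq: assumes "x \<in> D" "y \<in> D" shows "dbl f D a a' (x + mul y a) = f x + mul (f y) a'"
proof -
  let ?P = "\<lambda>p. fst p \<in> D \<and> snd p \<in> D \<and> x + mul y a = fst p + mul (snd p) a"
  have "?P (x, y)" using assms by simp
  then have "?P (SOME p. ?P p)" by (rule someI)
  moreover obtain p1 p2 where pe: "(SOME p. ?P p) = (p1, p2)" by (cases "SOME p. ?P p")
  ultimately have q: "p1 \<in> D" "p2 \<in> D" "x + mul y a = p1 + mul p2 a" by simp_all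
  have "x = p1 \<and> y = p2" by (rule uniq[OF assms(1,2) q])
  then have "(SOME p. ?P p) = (x, y)" using pe by simp
  then show ?thesis unfolding dbl_def Let_def by simp
qed

end

context fixes D D' a a' f assumes cD: "csub D" and cD': "csub D'" and pa: "perp a D" and pa': "perp a' D'"
  and na: "nrm a \<noteq> 0" and naa: "nrm a' = nrm a" and h: "dhom f D D'"
begin

lemma na': "nrm a' \<noteq> 0" using na naa by simp
lemma hD: "x \<in> D \<Longrightarrow> f x \<in> D'" using h by (simp add: dhom_def)
lemma hadd: "x \<in> D \<Longrightarrow> y \<in> D \<Longrightarrow> f (x + y) = f x + f y" using h by (simp add: dhom_def)
lemma hsc: "x \<in> D \<Longrightarrow> f (sc c x) = sc c (f x)" using h by (simp add: dhom_def)
lemma hmul: "x \<in> D \<Longrightarrow> y \<in> D \<Longrightarrow> f (mul x y) = mul (f x) (f y)" using h by (simp add: dhom_def)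
lemma hone: "f one = one" using h by (simp add: dhom_def)
lemma hcj: "x \<in> D \<Longrightarrow> f (cj x) = cj (f x)" using h by (simp add: dhom_def)
lemma h0: "f 0 = 0" using hsc[of 0 0] D_0[OF cD pa] by simp
lemma hneg: "x \<in> D \<Longrightarrow> f (- x) = - f x" using hsc[of x "-1"] by (simp add: vs.scale_minus_left)

lemma g_eq: "x \<in> D \<Longrightarrow> y \<in> D \<Longrightarrow> dbl f D a a' (x + mul y a) = f x + mul (f y) a'"
  by (rule dbl_eq[OF cD pa na])

lemma g_D: "x \<in> D \<Longrightarrow> dbl f D a a' x = f x"
  using g_eq[of x 0] D_0[OF cD pa] by (simp add: mul_0_l h0)

lemma g_a: "dbl f D a a' a = a'"
  using g_eq[of 0 one] D_0[OF cD pa] D_one[OF cD pa] by (simp add: h0 hone)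

lemma g_hom: "dhom (dbl f D a a') (E D a) (E D' a')"
proof -
  note DD = D_add[OF cD pa] D_diff[OF cD pa] D_sc[OF cD pa] D_mul[OF cD pa] D_cj[OF cD pa] D_0[OF cD pa] D_one[OF cD pa] D_neg[OF cD pa]
  note DD' = D_add[OF cD' pa'] D_diff[OF cD' pa'] D_sc[OF cD' pa'] D_mul[OF cD' pa'] D_cj[OF cD' pa'] D_0[OF cD' pa'] D_one[OF cD' pa'] D_neg[OF cD' pa']
  let ?g = "dbl f D a a'"
  have maps: "?g z \<in> E D' a'" if "z \<in> E D a" for z
    using that by (elim E_cases) (simp add: g_eq E_mem hD)
  have add: "?g (z1 + z2) = ?g z1 + ?g z2" if "z1 \<in> E D a" "z2 \<in> E D a" for z1 z2
    using that
  proof (elim E_cases)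
    fix x1 y1 x2 y2 assume h: "x1 \<in> D" "y1 \<in> D" "z1 = x1 + mul y1 a" "x2 \<in> D" "y2 \<in> D" "z2 = x2 + mul y2 a"
    have e: "z1 + z2 = (x1 + x2) + mul (y1 + y2) a" by (simp add: h mul_add_l algebra_simps)
    have "?g (z1 + z2) = f (x1 + x2) + mul (f (y1 + y2)) a'"
      unfolding e by (rule g_eq) (use h DD in auto)
    also have "\<dots> = ?g z1 + ?g z2" using h by (simp add: g_eq hadd mul_add_l algebra_simps)
    finally show ?thesis .
  qed
  have scl: "?g (sc c z) = sc c (?g z)" if "z \<in> E D a" for z c
    using that
  proof (elim E_cases)
    fix x y assume h: "x \<in> D" "y \<in> D" "z = x + mul y a"
    have e: "sc c z = sc c x + mul (sc c y) a" by (simp add: h mul_sc_l vs.scale_right_distrib)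
    have "?g (sc c z) = f (sc c x) + mul (f (sc c y)) a'"
      unfolding e by (rule g_eq) (use h DD in auto)
    also have "\<dots> = sc c (?g z)" using h by (simp add: g_eq hsc mul_sc_l vs.scale_right_distrib)
    finally show ?thesis .
  qed
  have mulh: "?g (mul z1 z2) = mul (?g z1) (?g z2)" if "z1 \<in> E D a" "z2 \<in> E D a" for z1 z2
    using that
  proof (elim E_cases)
    fix x y u v assume h: "x \<in> D" "y \<in> D" "z1 = x + mul y a" "u \<in> D" "v \<in> D" "z2 = u + mul v a"
    have "?g (mul z1 z2) = f (mul x u + sc (- nrm a) (mul (cj v) y)) + mul (f (mul v x + mul y (cj u))) a'"
      unfolding h(3,6) prodf[OF cD pa h(1,2,4,5)] by (rule g_eq) (use h DD in auto)
    also have "\<dots> = (mul (f x) (f u) + sc (- nrm a') (mul (cj (f v)) (f y))) + mul (mul (f v) (f x) + mul (f y) (cj (f u))) a'"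
      using h DD by (simp add: hadd hsc hmul hcj naa del: vs.scale_minus_left)
    also have "\<dots> = mul (f x + mul (f y) a') (f u + mul (f v) a')"
      by (rule prodf[OF cD' pa', symmetric]) (use h hD in auto)
    finally show ?thesis using h by (simp add: g_eq)
  qed
  have oneh: "?g one = one" using g_D[OF D_one[OF cD pa]] hone by simp
  have cjh: "?g (cj z) = cj (?g z)" if "z \<in> E D a" for z
    using that
  proof (elim E_cases)
    fix x y assume h: "x \<in> D" "y \<in> D" "z = x + mul y a"
    have "cj z = cj x + mul (- y) a" by (simp add: h cj_add cj_ya[OF cD pa] mul_neg_l)
    then have "?g (cj z) = cj (f x) + mul (- f y) a'" using h DD by (simp add: g_eq hcj hneg)
    also have "\<dots> = cj (?g z)" using h hD by (simp add: g_eq cj_add cj_ya[OF cD' pa'] mul_neg_l)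
    finally show ?thesis .
  qed
  show ?thesis unfolding dhom_def using maps add scl mulh oneh cjh by blast
qed

lemma g_inj: assumes "inj_on f D" shows "inj_on (dbl f D a a') (E D a)"
proof (rule inj_onI)
  fix z1 z2 assume "z1 \<in> E D a" "z2 \<in> E D a" "dbl f D a a' z1 = dbl f D a a' z2"
  then show "z1 = z2"
  proof (elim E_cases)
    fix x1 y1 x2 y2 assume e: "dbl f D a a' z1 = dbl f D a a' z2"
      and h: "x1 \<in> D" "y1 \<in> D" "z1 = x1 + mul y1 a" "x2 \<in> D" "y2 \<in> D" "z2 = x2 + mul y2 a"
    have "f x1 + mul (f y1) a' = f x2 + mul (f y2) a'" using e h by (simp add: g_eq)
    then have "f x1 = f x2 \<and> f y1 = f y2" using uniq[OF cD' pa' na'] h hD by blast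
    then have "x1 = x2 \<and> y1 = y2" using assms h by (meson inj_onD)
    then show ?thesis using h by simp
  qed
qed

lemma g_surj: assumes "f ` D = D'" shows "dbl f D a a' ` E D a = E D' a'"
proof
  show "dbl f D a a' ` E D a \<subseteq> E D' a'" using g_hom by (auto simp: dhom_def)
  show "E D' a' \<subseteq> dbl f D a a' ` E D a"
  proof
    fix z assume "z \<in> E D' a'"
    then show "z \<in> dbl f D a a' ` E D a"
    proof (elim E_cases)
      fix x' y' assume h: "x' \<in> D'" "y' \<in> D'" "z = x' + mul y' a'"
      obtain x y where "x \<in> D" "y \<in> D" "x' = f x" "y' = f y" using assms h by blast
      then show ?thesis using h g_eq E_mem by (metis image_eqI)
    qed
  qed
qed

end

sublocale fp: finite_dimensional_vector_space_pair_1 sc Bas sc by unfold_locales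

definition Tm where "Tm B z = (\<Sum>e\<in>B. sc (pl e z) e)"

lemma Tm_lin: "Vector_Spaces.linear sc sc (Tm B)"
  unfolding Vector_Spaces.linear_iff Tm_def
  by (simp add: vs pl_simps vs.scale_left_distrib sum.distrib vs.scale_sum_right)

lemma Tm_add: "Tm B (x + y) = Tm B x + Tm B y" using Tm_lin by (simp add: Vector_Spaces.linear_iff)
lemma Tm_sc: "Tm B (sc c x) = sc c (Tm B x)" using Tm_lin by (simp add: Vector_Spaces.linear_iff)
lemma Tm_diff: "Tm B (x - y) = Tm B x - Tm B y" unfolding Tm_def by (simp add: pl_simps vs.scale_left_diff_distrib sum_subtractf)

lemma Tm_in: "Tm B z \<in> vs.span B"
  unfolding Tm_def by (intro vs.span_sum vs.span_scale vs.span_base)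

lemma Tm_zero: assumes "vs.independent B" "finite B" "Tm B z = 0" "d \<in> vs.span B" shows "pl d z = 0"
proof -
  have B: "\<forall>e\<in>B. pl e z = 0"
    using vs.independentD[OF assms(1) assms(2) subset_refl, of "\<lambda>e. pl e z"] assms(3) by (auto simp: Tm_def)
  have "vs.subspace {d. pl d z = 0}"
    by (rule vs.subspaceI) (auto simp: pl_simps)
  then show ?thesis using vs.span_induct[OF assms(4), of "\<lambda>d. pl d z = 0"] B by auto
qed

lemma proj: assumes W: "vs.subspace W" and nd: "\<forall>x\<in>W. (\<forall>y\<in>W. pl x y = 0) \<longrightarrow> x = 0"
  shows "\<exists>k\<in>W. \<forall>d\<in>W. pl (z - k) d = 0"
proof -
  obtain B where B: "B \<subseteq> W" "vs.independent B" "W \<subseteq> vs.span B" "card B = vs.dim W"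
    using vs.basis_exists[of W] by metis
  have fB: "finite B" using B(2) fd.finiteI_independent by blast
  have spB: "vs.span B = W" using vs.span_subspace[OF B(1) B(3) W] .
  have inj: "inj_on (Tm B) W"
  proof (rule inj_onI)
    fix x y assume xy: "x \<in> W" "y \<in> W" "Tm B x = Tm B y"
    then have "Tm B (x - y) = 0" by (simp add: Tm_diff)
    then have "\<forall>d\<in>W. pl d (x - y) = 0" using Tm_zero[OF B(2) fB] spB by blast
    then have "\<forall>d\<in>W. pl (x - y) d = 0" by (metis pl_sym)
    moreover have "x - y \<in> W" using xy W vs.subspace_diff by blast
    ultimately show "x = y" using nd by auto
  qed
  have spW: "vs.span W = W" using W by simp
  have dimeq: "vs.dim (Tm B ` W) = vs.dim W"
    using fp.dim_image_eq[OF Tm_lin[of B], of W] inj spW by simp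
  have sub: "Tm B ` W \<subseteq> W" using Tm_in spB by blast
  have subs: "vs.subspace (Tm B ` W)"
  proof (rule vs.subspaceI)
    show "0 \<in> Tm B ` W" using Tm_sc[of B 0 0] W vs.subspace_0 by (metis image_eqI vs.scale_zero_left)
    show "x + y \<in> Tm B ` W" if "x \<in> Tm B ` W" "y \<in> Tm B ` W" for x y
      using that W vs.subspace_add Tm_add by (smt (verit, ccfv_SIG) image_iff)
    show "sc c x \<in> Tm B ` W" if "x \<in> Tm B ` W" for x c
      using that W vs.subspace_scale Tm_sc by (smt (verit, ccfv_SIG) image_iff)
  qed
  have eq: "Tm B ` W = W" using fd.subspace_dim_equal[OF subs W sub] dimeq by simp
  have "Tm B z \<in> W" using Tm_in spB by blast
  then obtain k where k: "k \<in> W" "Tm B k = Tm B z" using eq by (metis imageE)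
  then have "Tm B (z - k) = 0" by (simp add: Tm_diff)
  then have "\<forall>d\<in>W. pl d (z - k) = 0" using Tm_zero[OF B(2) fB] spB by blast
  then show ?thesis using k(1) by (metis pl_sym)
qed

lemma exists_perp: assumes W: "vs.subspace W" and d: "vs.dim W < 8"
  shows "\<exists>v. v \<noteq> 0 \<and> (\<forall>d\<in>W. pl v d = 0)"
proof -
  obtain B where B: "B \<subseteq> W" "vs.independent B" "W \<subseteq> vs.span B" "card B = vs.dim W"
    using vs.basis_exists[of W] by metis
  have fB: "finite B" using B(2) fd.finiteI_independent by blast
  have spB: "vs.span B = W" using vs.span_subspace[OF B(1) B(3) W] .
  have "\<not> inj (Tm B)"
  proof
    assume inj: "inj (Tm B)"
    have "vs.dim (Tm B ` UNIV) = vs.dim (UNIV :: 'v set)"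
      using fp.dim_image_eq[OF Tm_lin[of B], of UNIV] inj by simp
    moreover have "vs.dim (Tm B ` UNIV) \<le> vs.dim W"
      using fd.dim_subset[of "Tm B ` UNIV" W] Tm_in spB by blast
    ultimately show False using d dim8 by simp
  qed
  then obtain x y where xy: "x \<noteq> y" "Tm B x = Tm B y" unfolding inj_def by blast
  then have "Tm B (x - y) = 0" by (simp add: Tm_diff)
  then have "\<forall>d\<in>W. pl d (x - y) = 0" using Tm_zero[OF B(2) fB] spB by blast
  then show ?thesis using xy(1) by (metis pl_sym right_minus_eq)
qed

lemma dim0: "vs.dim {0::'v} = 0"
  by (metis vs.dim_span vs.span_insert_0 vs.span_empty vs.dim_eq_card_independent vs.independent_empty card.empty)

lemma dimE: assumes cD: "csub D" and pa: "perp a D" and na: "nrm a \<noteq> 0"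
  shows "vs.dim (E D a) = 2 * vs.dim D"
proof -
  let ?T = "(\<lambda>y. mul y a) ` D"
  have sD: "vs.subspace D" using D_sub[OF cD pa] .
  have sT: "vs.subspace ?T"
  proof (rule vs.subspaceI)
    show "0 \<in> ?T" using D_0[OF cD pa] by (metis image_eqI mul_0_l)
    show "x + y \<in> ?T" if "x \<in> ?T" "y \<in> ?T" for x y
      using that D_add[OF cD pa] by (auto simp: mul_add_l[symmetric])
    show "sc c x \<in> ?T" if "x \<in> ?T" for x c
      using that D_sc[OF cD pa] by (auto simp: mul_sc_l[symmetric])
  qed
  have Eeq: "E D a = {x + y |x y. x \<in> D \<and> y \<in> ?T}" unfolding E_def by blast
  have I: "D \<inter> ?T = {0}"
  proof
    show "D \<inter> ?T \<subseteq> {0}"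
    proof
      fix z assume "z \<in> D \<inter> ?T"
      then obtain y where y: "y \<in> D" "z \<in> D" "z = mul y a" by blast
      have "z + mul 0 a = 0 + mul y a" using y by (simp add: mul_0_l)
      then have "z = 0" using uniq[OF cD pa na y(2) D_0[OF cD pa] D_0[OF cD pa] y(1)] by blast
      then show "z \<in> {0}" by simp
    qed
    show "{0} \<subseteq> D \<inter> ?T" using D_0[OF cD pa] by (auto intro!: image_eqI[of _ _ 0] simp: mul_0_l)
  qed
  have inj: "inj_on (\<lambda>y. mul y a) (vs.span D)"
  proof (rule inj_onI)
    fix x y assume "mul x a = mul y a"
    then have "mul (x - y) a = 0" by (simp add: mul_diff_l)
    then have "nrm (x - y) * nrm a = 0" by (metis nrm_mul nrm_0)
    then show "x = y" using na aniso by (metis mult_eq_0_iff right_minus_eq)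
  qed
  have dT: "vs.dim ?T = vs.dim D" by (rule fp.dim_image_eq[OF linl inj])
  have "vs.dim (E D a) + vs.dim (D \<inter> ?T) = vs.dim D + vs.dim ?T"
    unfolding Eeq by (rule fd.dim_sums_Int[OF sD sT])
  then show ?thesis using I dT dim0 by simp
qed

lemma aut_lin: "algebra_automorphism sc mul g \<Longrightarrow> g (x + y) = g x + g y \<and> g (sc c x) = sc c (g x)"
  by (simp add: algebra_automorphism_def Vector_Spaces.linear_iff)

lemma aut_mul: "algebra_automorphism sc mul g \<Longrightarrow> g (mul x y) = mul (g x) (g y)"
  by (simp add: algebra_automorphism_def)

lemma aut_one: assumes g: "algebra_automorphism sc mul g" shows "g one = one"
proof -
  have s: "surj g" using g by (simp add: algebra_automorphism_def bij_is_surj)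
  obtain y where "g y = one" using s by (metis surjD)
  then have "mul (g one) one = one" using aut_mul[OF g, of one y] by simp
  then show ?thesis by simp
qed

lemma sq: "mul z z = sc (tr z) z - sc (nrm z) one"
proof -
  have h: "sc (tr z) z - mul z z = sc (nrm z) one" using QE2[of z] mul_cj_r[of z z] by simp
  show ?thesis by (simp add: h[symmetric])
qed

lemma aut_nrm: assumes g: "algebra_automorphism sc mul g" shows "nrm (g z) = nrm z"
proof -
  have inj: "inj g" using g by (simp add: algebra_automorphism_def bij_is_inj)
  have g1: "g one = one" by (rule aut_one[OF g])
  have gd: "g (x - y) = g x - g y" for x y using aut_lin[OF g, of "x - y" y] by (simp add: eq_diff_eq)
  have "g (mul z z) = sc (tr z) (g z) - sc (nrm z) one" using aut_lin[OF g] g1 by (simp add: sq gd)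
  moreover have "g (mul z z) = sc (tr (g z)) (g z) - sc (nrm (g z)) one" using aut_mul[OF g] sq[of "g z"] by simp
  ultimately have e: "sc (tr z - tr (g z)) (g z) = sc (nrm z - nrm (g z)) one"
    by (simp add: vs.scale_left_diff_distrib algebra_simps)
  have t: "tr z = tr (g z)"
  proof (rule ccontr)
    assume ne: "tr z \<noteq> tr (g z)"
    define c where "c = (nrm z - nrm (g z)) / (tr z - tr (g z))"
    have "g z = sc c one" using e ne unfolding c_def
      by (metis (no_types, lifting) divide_inverse_commute eq_iff_diff_eq_0 vs.scale_left_imp_eq vs.scale_scale
          mult.commute right_inverse vs.scale_one)
    moreover have "g (sc c one) = sc c one" using aut_lin[OF g] g1 by simp
    ultimately have "z = sc c one" using inj by (metis injD)
    then have "tr z = tr (g z)" using \<open>g (sc c one) = sc c one\<close> by simp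
    then show False using ne by simp
  qed
  then have "sc (nrm z - nrm (g z)) one = 0" using e by simp
  then show ?thesis using one_ne0 by simp
qed

lemma aut_comp: "algebra_automorphism sc mul g \<Longrightarrow> algebra_automorphism sc mul h \<Longrightarrow> algebra_automorphism sc mul (g \<circ> h)"
  unfolding algebra_automorphism_def
  by (auto intro: Vector_Spaces.linear_compose bij_comp)

lemma aut_inv: assumes g: "algebra_automorphism sc mul g" shows "algebra_automorphism sc mul (inv g)"
proof -
  have b: "bij g" using g by (simp add: algebra_automorphism_def)
  have i: "inj g" using b bij_is_inj by blast
  have gi: "g (inv g x) = x" for x using b by (simp add: bij_is_surj surj_f_inv_f)
  have "inv g (x + y) = inv g x + inv g y" for x y
    using gi aut_lin[OF g] by (metis injD[OF i])
  moreover have "inv g (sc c x) = sc c (inv g x)" for c x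
    using gi aut_lin[OF g] by (metis injD[OF i])
  moreover have "inv g (mul x y) = mul (inv g x) (inv g y)" for x y
    using gi aut_mul[OF g] by (metis injD[OF i])
  ultimately show ?thesis unfolding algebra_automorphism_def Vector_Spaces.linear_iff
    using vs b bij_imp_bij_inv by blast
qed

lemma dhom_id: "csub D \<Longrightarrow> dhom id D D"
  unfolding dhom_def csub_def by (auto intro: vs.subspace_add vs.subspace_scale)

lemma main:
  assumes K: "two_dim_composition_subalgebra sc mul one nrm K"
    and phi: "local_automorphism sc mul \<phi>"
  shows "\<exists>\<psi>. algebra_automorphism sc mul \<psi> \<and> (\<forall>k\<in>K. \<psi> k = \<phi> k) \<and> \<psi> x = \<phi> x"
proof -
  have cK: "csub K" and dK: "vs.dim K = 2" and sK: "vs.subspace K" and oneK: "one \<in> K"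
    using K by (auto simp: two_dim_composition_subalgebra_def csub_def)
  have linphi: "Vector_Spaces.linear sc sc \<phi>" using phi by (simp add: local_automorphism_def)
  have phadd: "\<phi> (a + b) = \<phi> a + \<phi> b" for a b using linphi by (simp add: Vector_Spaces.linear_iff)
  have phsc: "\<phi> (sc c a) = sc c (\<phi> a)" for a c using linphi by (simp add: Vector_Spaces.linear_iff)
  have loc: "\<exists>g. algebra_automorphism sc mul g \<and> \<phi> y = g y" for y using phi by (simp add: local_automorphism_def)
  obtain u where u: "u \<in> K" "u \<notin> vs.span {one}"
  proof -
    have "\<not> K \<subseteq> vs.span {one}"
    proof
      assume "K \<subseteq> vs.span {one}"
      then have "vs.dim K \<le> card {one}" by (rule vs.dim_le_card) simp
      then show False using dK by simp
    qed
    then show ?thesis using that by blast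
  qed
  have ind: "vs.independent {u, one}"
    using vs.independent_insertI[OF u(2)] one_ne0 vs.dependent_single by simp
  have un: "u \<noteq> one" using u(2) vs.span_base by blast
  have Ksp: "K \<subseteq> vs.span {u, one}"
    by (rule fd.card_ge_dim_independent) (use u oneK ind un dK in auto)
  obtain h where h: "algebra_automorphism sc mul h" "\<phi> u = h u" using loc by blast
  have phone: "\<phi> one = one" using loc[of one] aut_one by metis
  have phK: "\<phi> k = h k" if "k \<in> K" for k
  proof -
    have "k \<in> vs.span {u, one}" using that Ksp by blast
    moreover have "vs.subspace {k. \<phi> k = h k}"
      by (rule vs.subspaceI) (auto simp: phadd phsc aut_lin[OF h(1)] phsc[of 0 0, simplified] aut_lin[OF h(1), of 0 0 0, simplified])
    ultimately show ?thesis
    proof (rule vs.span_induct)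
      fix y assume "y \<in> {u, one}"
      then show "\<phi> y = h y" using h(2) phone aut_one[OF h(1)] by auto
    qed
  qed
  define hi where "hi = inv h"
  have hi: "algebra_automorphism sc mul hi" unfolding hi_def by (rule aut_inv[OF h(1)])
  have bh: "bij h" using h(1) by (simp add: algebra_automorphism_def)
  have hhi: "h (hi y) = y" for y unfolding hi_def using bh by (simp add: bij_is_surj surj_f_inv_f)
  have hih: "hi (h y) = y" for y unfolding hi_def using bh by (simp add: bij_is_inj)
  define ph where "ph = hi \<circ> \<phi>"
  have ph_add: "ph (a + b) = ph a + ph b" for a b unfolding ph_def using phadd aut_lin[OF hi] by simp
  have ph_sc: "ph (sc c a) = sc c (ph a)" for a c unfolding ph_def using phsc aut_lin[OF hi] by simp
  have ph_diff: "ph (a - b) = ph a - ph b" for a b using ph_add[of "a - b" b] by (simp add: eq_diff_eq)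
  have ph_nrm: "nrm (ph z) = nrm z" for z
  proof -
    obtain g where g: "algebra_automorphism sc mul g" "\<phi> z = g z" using loc by blast
    have "ph z = (hi \<circ> g) z" unfolding ph_def using g by simp
    then show ?thesis using aut_nrm[OF aut_comp[OF hi g(1)]] by simp
  qed
  have ph_pl: "pl (ph a) (ph b) = pl a b" for a b
    unfolding polar_def ph_add[symmetric] ph_nrm by simp
  have ph_K: "ph k = k" if "k \<in> K" for k unfolding ph_def using phK[OF that] hih by simp
  have ndK: "\<forall>a\<in>K. (\<forall>b\<in>K. pl a b = 0) \<longrightarrow> a = 0" using cK by (simp add: csub_def)
  obtain k where k: "k \<in> K" "\<forall>d\<in>K. pl (x - k) d = 0" using proj[OF sK ndK, of x] by blast
  define w where "w = x - k"
  define w' where "w' = ph w"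
  have xw: "x = k + w" unfolding w_def by simp
  have phx: "ph x = k + w'" unfolding w'_def xw ph_add ph_K[OF k(1)] ..
  have pw: "perp w K" using k(2) unfolding w_def perp_def by blast
  have pw': "perp w' K" unfolding perp_def w'_def
  proof
    fix d assume "d \<in> K"
    then have "pl (ph w) (ph d) = 0" using ph_pl pw unfolding perp_def by simp
    then show "pl (ph w) d = 0" using ph_K[OF \<open>d \<in> K\<close>] by simp
  qed
  have nw: "nrm w' = nrm w" unfolding w'_def by (rule ph_nrm)
  have phix: "\<phi> x = h (ph x)" unfolding ph_def using hhi by simp
  show ?thesis
  proof (cases "w = 0")
    case True
    then have "w' = 0" unfolding w'_def using ph_sc[of 0 0] by simp
    then have "\<phi> x = h x" using phix phx xw True by simp
    then show ?thesis using h(1) phK by metis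
  next
    case False
    then have na: "nrm w \<noteq> 0" using aniso by blast
    define g1 where "g1 = dbl id K w w'"
    define E1 where "E1 = E K w"
    define E1' where "E1' = E K w'"
    have cE1: "csub E1" unfolding E1_def by (rule csub_E[OF cK pw na])
    have cE1': "csub E1'" unfolding E1'_def by (rule csub_E[OF cK pw']) (use na nw in simp)
    have g1h: "dhom g1 E1 E1'" unfolding g1_def E1_def E1'_def
      by (rule g_hom[OF cK cK pw pw' na nw dhom_id[OF cK]])
    have g1i: "inj_on g1 E1" unfolding g1_def E1_def
      by (rule g_inj[OF cK cK pw pw' na nw dhom_id[OF cK]]) simp
    have g1s: "g1 ` E1 = E1'" unfolding g1_def E1_def E1'_def
      by (rule g_surj[OF cK cK pw pw' na nw dhom_id[OF cK]]) simp
    have g1K: "g1 d = d" if "d \<in> K" for d unfolding g1_def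
      using g_D[OF cK cK pw pw' na nw dhom_id[OF cK] that] by simp
    have g1w: "g1 w = w'" unfolding g1_def by (rule g_a[OF cK cK pw pw' na nw dhom_id[OF cK]])
    have dE1: "vs.dim E1 = 4" unfolding E1_def using dimE[OF cK pw na] dK by simp
    have dE1': "vs.dim E1' = 4" unfolding E1'_def using dimE[OF cK pw'] na nw dK by simp
    have KE1: "K \<subseteq> E1" unfolding E1_def by (rule D_sub_E[OF cK pw na])
    have KE1': "K \<subseteq> E1'" unfolding E1'_def by (rule D_sub_E[OF cK pw']) (use na nw in simp)
    have wE1: "w \<in> E1" unfolding E1_def using E_mem[of 0 K one w] D_0[OF cK pw] oneK by simp
    let ?W = "{a + b |a b. a \<in> E1 \<and> b \<in> E1'}"
    have sE1: "vs.subspace E1" using cE1 by (simp add: csub_def)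
    have sE1': "vs.subspace E1'" using cE1' by (simp add: csub_def)
    have "vs.dim ?W + vs.dim (E1 \<inter> E1') = vs.dim E1 + vs.dim E1'" by (rule fd.dim_sums_Int[OF sE1 sE1'])
    moreover have "vs.dim K \<le> vs.dim (E1 \<inter> E1')" using KE1 KE1' fd.dim_subset by (meson le_inf_iff)
    ultimately have dW: "vs.dim ?W < 8" using dE1 dE1' dK by simp
    obtain v where v: "v \<noteq> 0" "\<forall>d\<in>?W. pl v d = 0" using exists_perp[OF vs.subspace_sums[OF sE1 sE1'] dW] by blast
    have pv: "perp v E1"
      unfolding perp_def
    proof
      fix d assume "d \<in> E1"
      then have "d + 0 \<in> ?W" using sE1' vs.subspace_0 by blast
      then show "pl v d = 0" using v(2) by simp
    qed
    have pv': "perp v E1'"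
      unfolding perp_def
    proof
      fix d assume "d \<in> E1'"
      then have "0 + d \<in> ?W" using sE1 vs.subspace_0 by blast
      then show "pl v d = 0" using v(2) by simp
    qed
    have nv: "nrm v \<noteq> 0" using v(1) aniso by blast
    define g2 where "g2 = dbl g1 E1 v v"
    have g2h: "dhom g2 (E E1 v) (E E1' v)" unfolding g2_def
      by (rule g_hom[OF cE1 cE1' pv pv' nv refl g1h])
    have g2i: "inj_on g2 (E E1 v)" unfolding g2_def
      by (rule g_inj[OF cE1 cE1' pv pv' nv refl g1h g1i])
    have g2s: "g2 ` (E E1 v) = E E1' v" unfolding g2_def
      by (rule g_surj[OF cE1 cE1' pv pv' nv refl g1h g1s])
    have g2E1: "g2 d = g1 d" if "d \<in> E1" for d unfolding g2_def
      by (rule g_D[OF cE1 cE1' pv pv' nv refl g1h that])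
    have full: "E D' v = UNIV" if cD': "csub D'" and pD': "perp v D'" and dD': "vs.dim D' = 4" for D'
    proof -
      have cE: "csub (E D' v)" by (rule csub_E[OF cD' pD' nv])
      have "vs.dim (E D' v) = 8" using dimE[OF cD' pD' nv] dD' by simp
      then show ?thesis using fd.subspace_dim_equal[of "E D' v" UNIV] cE dim8 by (simp add: csub_def)
    qed
    have U1: "E E1 v = UNIV" by (rule full[OF cE1 pv dE1])
    have U2: "E E1' v = UNIV" by (rule full[OF cE1' pv' dE1'])
    have g2a: "g2 (a + b) = g2 a + g2 b" "g2 (sc c a) = sc c (g2 a)" "g2 (mul a b) = mul (g2 a) (g2 b)" for a b c
      using g2h U1 by (auto simp: dhom_def)
    have aut2: "algebra_automorphism sc mul g2"
      unfolding algebra_automorphism_def Vector_Spaces.linear_iff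
    proof (intro conjI allI)
      show "bij g2" using g2i g2s U1 U2 by (simp add: bij_def)
    qed (use vs g2a in auto)
    define \<psi> where "\<psi> = h \<circ> g2"
    have aut: "algebra_automorphism sc mul \<psi>" unfolding \<psi>_def by (rule aut_comp[OF h(1) aut2])
    have "\<psi> d = \<phi> d" if "d \<in> K" for d
      unfolding \<psi>_def using g2E1[of d] g1K[OF that] KE1 that phK[OF that] by auto
    moreover have "\<psi> x = \<phi> x"
    proof -
      have "g2 x = g2 k + g2 w" using xw g2a by simp
      also have "\<dots> = k + w'" using g2E1 KE1 k(1) g1K g1w wE1 by auto
      finally show ?thesis unfolding \<psi>_def using phix phx by simp
    qed
    ultimately show ?thesis using aut by blast
  qed
qed

end

theorem lemma4p4:
  fixes sc :: "'k::field \<Rightarrow> 'v::ab_group_add \<Rightarrow> 'v"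
    and mul :: "'v \<Rightarrow> 'v \<Rightarrow> 'v" and one :: 'v and nrm :: "'v \<Rightarrow> 'k"
    and K :: "'v set" and x :: 'v and \<phi> :: "'v \<Rightarrow> 'v"
  assumes "cayley_algebra sc mul one nrm"
    and "division_algebra mul"
    and "two_dim_composition_subalgebra sc mul one nrm K"
    and "local_automorphism sc mul \<phi>"
  shows "\<exists>\<psi>. algebra_automorphism sc mul \<psi> \<and> (\<forall>k\<in>K. \<psi> k = \<phi> k) \<and> \<psi> x = \<phi> x"
proof -
  interpret cay sc mul one nrm using assms(1,2) by unfold_locales
  show ?thesis by (rule main[OF assms(3,4)])
qed

end
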